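(* Let $M$ be the second moment matrix of the observed variables, $M_{ij}=\mathbb E[v_iv_j]$, and let $\hat M$ be its empirical estimate from $n$ i.i.d. samples. Let $\hat a$ be the estimate of the $m$ accuracies $a_i=\mathbb E[v_iY(i)]$ obtained from $\hat M$ by the triplet method. Define $a_{\min}=\min\{\min_i|\hat a_i|,\min_i|a_i|\}$ and assume $\mathrm{sign}(a_i)=\mathrm{sign}(\hat a_i)$ for all $i$. Assume further that $n$ exceeds some $n_0$ such that $a_{\min}>0$ and $\hat M_{ij}\neq0$. Then $$\mathbb E\big[\|\hat a-a\|_2\big]\le C_a\frac{1}{a_{\min}^5}\sqrt{\frac mn}$$ for some constant $C_a$.
   Context: Observed variables $v_i\in\{\pm1\}$ each attached to a hidden variable $Y(i)\in\{\pm1\}$ in a binary Ising model. Triplet method: for each accuracy to estimate, pick indices forming a triplet $(i,j,k)$ of observed variables pairwise conditionally independent given $Y(i)$ (so that $\mathbb E[v_iv_j]=a_ia_j$ etc.), and set $|\hat a_i|=\big(|\hat M_{ij}||\hat M_{ik}|/|\hat M_{jk}|\big)^{1/2}$ and analogously for $j,k$; at most one triplet is used per accuracy. *)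

theory Defs
  imports "HOL-Probability.Probability"
begin

text \<open>A joint distribution D over pairs (v, Y): v is the vector of observed variables
  (indexed by nat, only indices below m matter), Y the vector of hidden variables;
  observed variable i is attached to the hidden variable Y (hid i).\<close>

definition accuracy :: "((nat \<Rightarrow> real) \<times> (nat \<Rightarrow> real)) pmf \<Rightarrow> (nat \<Rightarrow> nat) \<Rightarrow> nat \<Rightarrow> real" where
  "accuracy D hid i = measure_pmf.expectation D (\<lambda>(v, y). v i * y (hid i))"

definition moment :: "((nat \<Rightarrow> real) \<times> (nat \<Rightarrow> real)) pmf \<Rightarrow> nat \<Rightarrow> nat \<Rightarrow> real" where
  "moment D i j = measure_pmf.expectation D (\<lambda>(v, y). v i * v j)"

definition samples :: "nat \<Rightarrow> ((nat \<Rightarrow> real) \<times> (nat \<Rightarrow> real)) pmf \<Rightarrow> (nat \<Rightarrow> nat \<Rightarrow> real) pmf" where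
  "samples n D = Pi_pmf {..<n} (\<lambda>_. 0) (\<lambda>_. map_pmf fst D)"

definition emp_moment :: "nat \<Rightarrow> (nat \<Rightarrow> nat \<Rightarrow> real) \<Rightarrow> nat \<Rightarrow> nat \<Rightarrow> real" where
  "emp_moment n S i j = (\<Sum>s<n. S s i * S s j) / real n"

definition triplet_abs :: "nat \<Rightarrow> (nat \<Rightarrow> nat \<Rightarrow> real) \<Rightarrow> nat \<Rightarrow> nat \<Rightarrow> nat \<Rightarrow> real" where
  "triplet_abs n S i j k =
     sqrt (\<bar>emp_moment n S i j\<bar> * \<bar>emp_moment n S i k\<bar> / \<bar>emp_moment n S j k\<bar>)"

end

theory Submission
  imports Defs
begin


lemma int_bnd:
  fixes f :: "'a \<Rightarrow> real"
  assumes "\<And>x. x \<in> set_pmf p \<Longrightarrow> \<bar>f x\<bar> \<le> K"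
  shows "integrable (measure_pmf p) f"
  by (intro measure_pmf.integrable_const_bound[where B=K]) (auto simp: AE_measure_pmf_iff assms)

lemma exp_abs_le:
  fixes f :: "'a \<Rightarrow> real"
  assumes "\<And>x. x \<in> set_pmf p \<Longrightarrow> \<bar>f x\<bar> \<le> K"
  shows "\<bar>measure_pmf.expectation p f\<bar> \<le> K"
proof -
  have i: "integrable (measure_pmf p) f" by (rule int_bnd[OF assms])
  have "measure_pmf.expectation p f \<le> K"
    by (rule measure_pmf.integral_le_const[OF i]) (use assms in \<open>auto simp: AE_measure_pmf_iff abs_le_iff\<close>)
  moreover have "-K \<le> measure_pmf.expectation p f"
    by (rule measure_pmf.integral_ge_const[OF i]) (use assms in \<open>force simp: AE_measure_pmf_iff abs_le_iff\<close>)
  ultimately show ?thesis by auto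
qed

lemma pair_nn:
  fixes f :: "'a \<times> 'b \<Rightarrow> real"
  assumes "\<And>a b. a \<in> set_pmf A \<Longrightarrow> b \<in> set_pmf B \<Longrightarrow> 0 \<le> f (a, b) \<and> f (a, b) \<le> K"
  shows "measure_pmf.expectation (pair_pmf A B) f =
         measure_pmf.expectation A (\<lambda>a. measure_pmf.expectation B (\<lambda>b. f (a, b)))"
proof -
  have b1: "\<bar>f x\<bar> \<le> K" if "x \<in> set_pmf (pair_pmf A B)" for x
    using that assms by (cases x) (auto simp: set_pair_pmf)
  have b2: "\<bar>measure_pmf.expectation B (\<lambda>b. f (a, b))\<bar> \<le> K" if "a \<in> set_pmf A" for a
    by (rule exp_abs_le) (use assms that in auto)
  have "ennreal (measure_pmf.expectation (pair_pmf A B) f) = (\<integral>\<^sup>+x. ennreal (f x) \<partial>pair_pmf A B)"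
    by (rule nn_integral_eq_integral[symmetric]) 
       (auto intro!: int_bnd[OF b1] simp: AE_measure_pmf_iff set_pair_pmf assms)
  also have "\<dots> = (\<integral>\<^sup>+a. \<integral>\<^sup>+b. ennreal (f (a, b)) \<partial>B \<partial>A)" by (rule nn_integral_pair_pmf')
  also have "\<dots> = (\<integral>\<^sup>+a. ennreal (measure_pmf.expectation B (\<lambda>b. f (a, b))) \<partial>A)"
    by (intro nn_integral_cong_AE AE_pmfI nn_integral_eq_integral int_bnd[where K=K])
       (use assms in \<open>auto simp: AE_measure_pmf_iff\<close>)
  also have "\<dots> = ennreal (measure_pmf.expectation A (\<lambda>a. measure_pmf.expectation B (\<lambda>b. f (a, b))))"
    by (intro nn_integral_eq_integral int_bnd[OF b2])
       (use assms in \<open>auto simp: AE_measure_pmf_iff intro!: Bochner_Integration.integral_nonneg_AE\<close>)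
  finally show ?thesis
    by (subst (asm) ennreal_inj)
       (use assms in \<open>auto simp: set_pair_pmf intro!: Bochner_Integration.integral_nonneg_AE AE_pmfI\<close>)
qed

lemma pair_int:
  fixes f :: "'a \<times> 'b \<Rightarrow> real"
  assumes "\<And>a b. a \<in> set_pmf A \<Longrightarrow> b \<in> set_pmf B \<Longrightarrow> \<bar>f (a, b)\<bar> \<le> K"
  shows "measure_pmf.expectation (pair_pmf A B) f =
         measure_pmf.expectation A (\<lambda>a. measure_pmf.expectation B (\<lambda>b. f (a, b)))"
proof -
  define fp where "fp = (\<lambda>x. max (f x) 0)"
  define fn where "fn = (\<lambda>x. max (- f x) 0)"
  have f: "f x = fp x - fn x" for x by (auto simp: fp_def fn_def)
  have bp: "0 \<le> fp (a,b) \<and> fp (a,b) \<le> K" "0 \<le> fn (a,b) \<and> fn (a,b) \<le> K"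
    if "a \<in> set_pmf A" "b \<in> set_pmf B" for a b
    using assms[OF that] by (auto simp: fp_def fn_def)
  have ip: "integrable (pair_pmf A B) fp" "integrable (pair_pmf A B) fn"
    using bp by (auto intro!: int_bnd[where K=K] simp: set_pair_pmf abs_le_iff; force)+
  have ip2: "integrable B (\<lambda>b. fp (a, b))" "integrable B (\<lambda>b. fn (a, b))" if "a \<in> set_pmf A" for a
    using that by (auto intro!: int_bnd[where K=K] dest: bp)
  have ip3: "integrable A (\<lambda>a. measure_pmf.expectation B (\<lambda>b. fp (a, b)))"
            "integrable A (\<lambda>a. measure_pmf.expectation B (\<lambda>b. fn (a, b)))"
    by (auto intro!: int_bnd[where K=K] exp_abs_le dest: bp)
  have "measure_pmf.expectation (pair_pmf A B) f =
        measure_pmf.expectation (pair_pmf A B) fp - measure_pmf.expectation (pair_pmf A B) fn"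
    unfolding f by (rule Bochner_Integration.integral_diff[OF ip])
  also have "\<dots> = measure_pmf.expectation A (\<lambda>a. measure_pmf.expectation B (\<lambda>b. fp (a, b)))
               - measure_pmf.expectation A (\<lambda>a. measure_pmf.expectation B (\<lambda>b. fn (a, b)))"
    by (subst pair_nn[where K=K], use bp in blast)+ simp
  also have "\<dots> = measure_pmf.expectation A (\<lambda>a. measure_pmf.expectation B (\<lambda>b. fp (a, b))
               - measure_pmf.expectation B (\<lambda>b. fn (a, b)))"
    by (rule Bochner_Integration.integral_diff[OF ip3, symmetric])
  also have "\<dots> = measure_pmf.expectation A (\<lambda>a. measure_pmf.expectation B (\<lambda>b. f (a, b)))"
    by (intro integral_cong_AE AE_pmfI)
       (auto simp: f Bochner_Integration.integral_diff[OF ip2])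
  finally show ?thesis .
qed



lemma E_lin4:
  fixes f1 f2 f3 f4 :: "'a \<Rightarrow> real"
  assumes "integrable (measure_pmf p) f1" "integrable (measure_pmf p) f2"
          "integrable (measure_pmf p) f3" "integrable (measure_pmf p) f4"
  shows "measure_pmf.expectation p (\<lambda>x. c0 + c1 * f1 x + c2 * f2 x + c3 * f3 x + c4 * f4 x)
       = c0 + c1 * measure_pmf.expectation p f1 + c2 * measure_pmf.expectation p f2
         + c3 * measure_pmf.expectation p f3 + c4 * measure_pmf.expectation p f4"
  using assms by (simp add: Bochner_Integration.integral_add)

lemma quartic: "((a::real) + b) ^ 4 = b ^ 4 + (4 * b ^ 3) * a ^ 1 + (6 * b ^ 2) * a ^ 2 + (4 * b) * a ^ 3 + 1 * a ^ 4"
  by algebra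

locale iidsum =
  fixes X :: "'b pmf" and g :: "'b \<Rightarrow> real" and dflt :: 'b
  assumes bnd: "\<And>x. x \<in> set_pmf X \<Longrightarrow> \<bar>g x\<bar> \<le> 2"
  and mean: "measure_pmf.expectation X g = 0"
begin

definition PP :: "nat \<Rightarrow> (nat \<Rightarrow> 'b) pmf" where
  "PP n = Pi_pmf {..<n} dflt (\<lambda>_. X)"

definition TT :: "nat \<Rightarrow> (nat \<Rightarrow> 'b) \<Rightarrow> real" where
  "TT n S = (\<Sum>s<n. g (S s))"

lemma supp: "S \<in> set_pmf (PP n) \<Longrightarrow> s < n \<Longrightarrow> S s \<in> set_pmf X"
  by (auto simp: PP_def set_Pi_pmf PiE_dflt_def)

lemma TT_bnd: "S \<in> set_pmf (PP n) \<Longrightarrow> \<bar>TT n S\<bar> \<le> 2 * real n"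
proof -
  assume S: "S \<in> set_pmf (PP n)"
  have "\<bar>TT n S\<bar> \<le> (\<Sum>s<n. \<bar>g (S s)\<bar>)" unfolding TT_def by (rule sum_abs)
  also have "\<dots> \<le> (\<Sum>s<n. 2)" by (intro sum_mono bnd supp[OF S]) auto
  finally show ?thesis by simp
qed

lemma TT_pow_int: "integrable (measure_pmf (PP n)) (\<lambda>S. TT n S ^ k)"
proof (rule int_bnd[where K="(2 * real n) ^ k"])
  fix S assume "S \<in> set_pmf (PP n)"
  then have "\<bar>TT n S\<bar> \<le> 2 * real n" by (rule TT_bnd)
  then show "\<bar>TT n S ^ k\<bar> \<le> (2 * real n) ^ k" unfolding power_abs
    by (intro power_mono) auto
qed

lemma TT_int: "integrable (measure_pmf (PP n)) (\<lambda>S. TT n S)"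
  using TT_pow_int[of n 1] by simp

lemma g_pow_int: "integrable (measure_pmf X) (\<lambda>x. g x ^ k)"
proof (rule int_bnd[where K="2 ^ k"])
  fix x assume "x \<in> set_pmf X"
  then have "\<bar>g x\<bar> \<le> 2" by (rule bnd)
  then show "\<bar>g x ^ k\<bar> \<le> 2 ^ k" unfolding power_abs
    by (intro power_mono) auto
qed

lemma g_int: "integrable (measure_pmf X) g"
  using g_pow_int[of 1] by simp

lemma TT_upd: "TT (Suc n) (f(n := y)) = TT n f + g y"
  unfolding TT_def by (simp add: sum.lessThan_Suc)

lemma step:
  "measure_pmf.expectation (PP (Suc n)) (\<lambda>S. TT (Suc n) S ^ k) =
   measure_pmf.expectation X (\<lambda>y. measure_pmf.expectation (PP n) (\<lambda>f. (TT n f + g y) ^ k))"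
proof -
  have "PP (Suc n) = map_pmf (\<lambda>(y,f). f(n:=y)) (pair_pmf X (PP n))"
    unfolding PP_def lessThan_Suc by (rule Pi_pmf_insert) auto
  then have "measure_pmf.expectation (PP (Suc n)) (\<lambda>S. TT (Suc n) S ^ k) =
     measure_pmf.expectation (pair_pmf X (PP n)) (\<lambda>(y, f). (TT n f + g y) ^ k)"
    by (simp add: case_prod_unfold TT_upd)
  also have "\<dots> = measure_pmf.expectation X (\<lambda>y. measure_pmf.expectation (PP n) (\<lambda>f. (TT n f + g y) ^ k))"
  proof (rule trans[OF pair_int[where K="(2 * real n + 2) ^ k"]])
    fix y f assume y: "y \<in> set_pmf X" and f: "f \<in> set_pmf (PP n)"
    have "\<bar>TT n f + g y\<bar> \<le> 2 * real n + 2" using TT_bnd[OF f] bnd[OF y] by linarith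
    then show "\<bar>(case (y, f) of (y, f) \<Rightarrow> (TT n f + g y) ^ k)\<bar> \<le> (2 * real n + 2) ^ k"
      by (simp only: prod.case power_abs) (rule power_mono; simp)
  qed simp
  finally show ?thesis .
qed

lemma E1: "measure_pmf.expectation (PP n) (TT n) = 0"
proof (induction n)
  case 0 show ?case by (simp add: TT_def)
next
  case (Suc n)
  have "measure_pmf.expectation (PP (Suc n)) (TT (Suc n)) =
        measure_pmf.expectation (PP (Suc n)) (\<lambda>S. TT (Suc n) S ^ 1)" by simp
  also have "\<dots> = measure_pmf.expectation X (\<lambda>y. measure_pmf.expectation (PP n) (\<lambda>f. (TT n f + g y) ^ 1))"
    by (rule step)
  also have "\<dots> = measure_pmf.expectation X (\<lambda>y. g y)"
    using Suc by (simp add: Bochner_Integration.integral_add TT_int)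
  finally show ?case using mean by simp
qed

lemma E2: "measure_pmf.expectation (PP n) (\<lambda>S. TT n S ^ 2) \<le> 4 * n"
proof (induction n)
  case 0 show ?case by (simp add: TT_def)
next
  case (Suc n)
  have "measure_pmf.expectation (PP (Suc n)) (\<lambda>S. TT (Suc n) S ^ 2)
     = measure_pmf.expectation X (\<lambda>y. measure_pmf.expectation (PP n) (\<lambda>f. (TT n f + g y) ^ 2))"
    by (rule step)
  also have "\<dots> = measure_pmf.expectation X (\<lambda>y. measure_pmf.expectation (PP n) (\<lambda>S. TT n S ^ 2) + g y ^ 2)"
  proof (intro Bochner_Integration.integral_cong refl)
    fix y
    have "measure_pmf.expectation (PP n) (\<lambda>f. (TT n f + g y) ^ 2) =
          measure_pmf.expectation (PP n) (\<lambda>f. g y ^ 2 + (2 * g y) * TT n f ^ 1 + 1 * TT n f ^ 2 + 0 * TT n f ^ 3 + 0 * TT n f ^ 4)"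
      by (simp add: power2_eq_square algebra_simps)
    also have "\<dots> = g y ^ 2 + (2 * g y) * measure_pmf.expectation (PP n) (\<lambda>f. TT n f ^ 1)
         + 1 * measure_pmf.expectation (PP n) (\<lambda>f. TT n f ^ 2)
         + 0 * measure_pmf.expectation (PP n) (\<lambda>f. TT n f ^ 3)
         + 0 * measure_pmf.expectation (PP n) (\<lambda>f. TT n f ^ 4)"
      by (rule E_lin4) (rule TT_pow_int)+
    finally show "measure_pmf.expectation (PP n) (\<lambda>f. (TT n f + g y) ^ 2) =
          measure_pmf.expectation (PP n) (\<lambda>S. TT n S ^ 2) + g y ^ 2"
      using E1[of n] by simp
  qed
  also have "\<dots> = measure_pmf.expectation (PP n) (\<lambda>S. TT n S ^ 2) + measure_pmf.expectation X (\<lambda>y. g y ^ 2)"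
    by (simp add: Bochner_Integration.integral_add g_pow_int)
  also have "measure_pmf.expectation X (\<lambda>y. g y ^ 2) \<le> 4"
  proof -
    have "\<bar>measure_pmf.expectation X (\<lambda>y. g y ^ 2)\<bar> \<le> 4"
    proof (rule exp_abs_le)
      fix x assume "x \<in> set_pmf X"
      then have "\<bar>g x\<bar> \<le> 2" by (rule bnd)
      then have "\<bar>g x\<bar> ^ 2 \<le> 2 ^ 2" by (intro power_mono) auto
      then show "\<bar>g x ^ 2\<bar> \<le> 4" by (simp add: power_abs)
    qed
    then show ?thesis by simp
  qed
  finally show ?case using Suc by simp
qed

lemma g_mom: "\<bar>measure_pmf.expectation X (\<lambda>y. g y ^ k)\<bar> \<le> 2 ^ k"
proof (rule exp_abs_le)
  fix x assume "x \<in> set_pmf X"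
  then have "\<bar>g x\<bar> \<le> 2" by (rule bnd)
  then show "\<bar>g x ^ k\<bar> \<le> 2 ^ k" unfolding power_abs by (intro power_mono) auto
qed

lemma E4: "measure_pmf.expectation (PP n) (\<lambda>S. TT n S ^ 4) \<le> 48 * real n ^ 2"
proof (induction n)
  case 0 show ?case by (simp add: TT_def)
next
  case (Suc n)
  define E where "E = (\<lambda>k. measure_pmf.expectation (PP n) (\<lambda>f. TT n f ^ k))"
  define G where "G = (\<lambda>k. measure_pmf.expectation X (\<lambda>y. g y ^ k))"
  have E1': "E 1 = 0" using E1[of n] by (simp add: E_def)
  have G1: "G 1 = 0" using mean by (simp add: G_def)
  have "measure_pmf.expectation (PP (Suc n)) (\<lambda>S. TT (Suc n) S ^ 4)
     = measure_pmf.expectation X (\<lambda>y. measure_pmf.expectation (PP n) (\<lambda>f. (TT n f + g y) ^ 4))"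
    by (rule step)
  also have "\<dots> = measure_pmf.expectation X (\<lambda>y. E 4 + (4 * E 3) * g y ^ 1 + (6 * E 2) * g y ^ 2
                    + (4 * E 1) * g y ^ 3 + 1 * g y ^ 4)"
  proof (intro Bochner_Integration.integral_cong refl)
    fix y
    have "measure_pmf.expectation (PP n) (\<lambda>f. (TT n f + g y) ^ 4) =
          measure_pmf.expectation (PP n) (\<lambda>f. g y ^ 4 + (4 * g y ^ 3) * TT n f ^ 1 + (6 * g y ^ 2) * TT n f ^ 2 + (4 * g y) * TT n f ^ 3 + 1 * TT n f ^ 4)"
      by (rule Bochner_Integration.integral_cong) (simp_all only: quartic)
    also have "\<dots> = g y ^ 4 + (4 * g y ^ 3) * E 1 + (6 * g y ^ 2) * E 2 + (4 * g y) * E 3 + 1 * E 4"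
      unfolding E_def by (rule E_lin4) (rule TT_pow_int)+
    finally show "measure_pmf.expectation (PP n) (\<lambda>f. (TT n f + g y) ^ 4) =
          E 4 + (4 * E 3) * g y ^ 1 + (6 * E 2) * g y ^ 2 + (4 * E 1) * g y ^ 3 + 1 * g y ^ 4"
      by (simp add: algebra_simps)
  qed
  also have "\<dots> = E 4 + (4 * E 3) * G 1 + (6 * E 2) * G 2 + (4 * E 1) * G 3 + 1 * G 4"
    unfolding G_def by (rule E_lin4) (rule g_pow_int)+
  also have "\<dots> = E 4 + 6 * E 2 * G 2 + G 4" using E1' G1 by simp
  also have "\<dots> \<le> 48 * real n ^ 2 + 6 * (4 * real n) * 4 + 16"
  proof -
    have "E 4 \<le> 48 * real n ^ 2" using Suc by (simp add: E_def)
    moreover have "E 2 \<le> 4 * real n" using E2[of n] by (simp add: E_def)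
    moreover have "0 \<le> E 2" unfolding E_def
      by (intro Bochner_Integration.integral_nonneg_AE) auto
    moreover have "G 2 \<le> 4" "0 \<le> G 2" "G 4 \<le> 16" using g_mom[of 2] g_mom[of 4] unfolding G_def
      by (auto intro!: Bochner_Integration.integral_nonneg_AE)
    ultimately have "E 2 * G 2 \<le> (4 * real n) * 4" by (intro mult_mono) auto
    with \<open>E 4 \<le> 48 * real n ^ 2\<close> \<open>G 4 \<le> 16\<close> show ?thesis by linarith
  qed
  also have "\<dots> \<le> 48 * real (Suc n) ^ 2" by (simp add: power2_eq_square algebra_simps)
  finally show ?case .
qed

end


lemma det:
  fixes Mij Mik Mjk Aij Aik Ajk a aj ak ah amin n :: real
  assumes Aij: "Aij = a * aj" and Aik: "Aik = a * ak" and Ajk: "Ajk = aj * ak"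
    and ha: "amin \<le> \<bar>a\<bar>" "\<bar>a\<bar> \<le> 1" and haj: "amin \<le> \<bar>aj\<bar>" "\<bar>aj\<bar> \<le> 1"
    and hak: "amin \<le> \<bar>ak\<bar>" "\<bar>ak\<bar> \<le> 1" and am: "0 < amin"
    and hM: "\<bar>Mij\<bar> \<le> 1" "\<bar>Mik\<bar> \<le> 1" "\<bar>Mjk\<bar> \<le> 1"
    and hn: "1 \<le> n" "1 \<le> n * \<bar>Mjk\<bar>"
    and hah: "\<bar>ah\<bar> = sqrt (\<bar>Mij\<bar> * \<bar>Mik\<bar> / \<bar>Mjk\<bar>)"
    and sg: "sgn ah = sgn a"
  shows "(ah - a)^2 \<le> 12 * ((Mij - Aij)^2 + (Mik - Aik)^2 + (Mjk - Ajk)^2) / amin^6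
                     + 64 * n * (Mjk - Ajk)^4 / amin^8"
proof -
  define \<alpha> where "\<alpha> = \<bar>ah\<bar>"
  define A where "A = \<bar>a\<bar>"
  define e where "e = \<bar>ah - a\<bar>"
  define P where "P = \<bar>Mij\<bar> * \<bar>Mik\<bar>"
  define Q where "Q = \<bar>Mjk\<bar>"
  define q where "q = \<bar>aj\<bar> * \<bar>ak\<bar>"
  define d1 where "d1 = \<bar>Mij - Aij\<bar>"
  define d2 where "d2 = \<bar>Mik - Aik\<bar>"
  define d3 where "d3 = \<bar>Mjk - Ajk\<bar>"
  have am1: "amin \<le> 1" using ha by linarith
  have A1: "amin \<le> A" "A \<le> 1" using ha by (auto simp: A_def)
  have Qpos: "0 < Q" using hn unfolding Q_def by (cases "Mjk = 0") auto
  have al0: "0 \<le> \<alpha>" by (simp add: \<alpha>_def)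
  have P0: "0 \<le> P" "P \<le> 1" using hM by (auto simp: P_def intro: mult_le_one)
  have al2: "\<alpha>^2 = P / Q" unfolding \<alpha>_def hah P_def Q_def
    by (rule real_sqrt_pow2) simp
  have alQ: "\<alpha>^2 * Q = P" using al2 Qpos by simp
  have e_eq: "e = \<bar>\<alpha> - A\<bar>"
  proof (cases "a > 0")
    case True
    then have "ah > 0" using sg by (metis sgn_greater sgn_pos)
    then show ?thesis using True by (simp add: e_def \<alpha>_def A_def)
  next
    case False
    then have "a < 0" using ha am by auto
    then have "ah < 0" using sg by (metis sgn_less sgn_neg)
    then show ?thesis using \<open>a < 0\<close> by (simp add: e_def \<alpha>_def A_def abs_minus_commute)
  qed
  have e0: "0 \<le> e" by (simp add: e_def)
  have q1: "amin^2 \<le> q" "q \<le> 1"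
    using haj hak am unfolding q_def power2_eq_square by (auto intro: mult_mono mult_le_one)
  have qpos: "0 < q" using q1 am by (smt (verit) zero_less_power)
  have p_eq: "\<bar>Aij\<bar> * \<bar>Aik\<bar> = A^2 * q" by (simp add: Aij Aik A_def q_def abs_mult power2_eq_square)
  have Aij1: "\<bar>Aij\<bar> \<le> 1" unfolding Aij abs_mult using ha haj by (auto intro: mult_le_one)
  have Pp: "\<bar>P - A^2 * q\<bar> \<le> d1 + d2"
  proof -
    have "\<bar>P - A^2 * q\<bar> = \<bar>\<bar>Mij * Mik\<bar> - \<bar>Aij * Aik\<bar>\<bar>" by (simp add: P_def p_eq[symmetric] abs_mult)
    also have "\<dots> \<le> \<bar>Mij * Mik - Aij * Aik\<bar>" by (rule abs_triangle_ineq3)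
    also have "Mij * Mik - Aij * Aik = (Mij - Aij) * Mik + Aij * (Mik - Aik)" by (simp add: algebra_simps)
    also have "\<bar>\<dots>\<bar> \<le> d1 * \<bar>Mik\<bar> + \<bar>Aij\<bar> * d2" unfolding d1_def d2_def
      using abs_triangle_ineq[of "(Mij - Aij) * Mik" "Aij * (Mik - Aik)"] by (simp add: abs_mult mult.commute)
    also have "\<dots> \<le> d1 * 1 + 1 * d2" using hM Aij1
      by (intro add_mono mult_left_mono mult_right_mono) (auto simp: d1_def d2_def)
    finally show ?thesis by simp
  qed
  have Qq: "\<bar>q - Q\<bar> \<le> d3" unfolding q_def Q_def d3_def Ajk abs_mult[symmetric]
    using abs_triangle_ineq3[of Mjk "aj * ak"] by (simp add: abs_minus_commute)
  have key: "(\<alpha> - A) * (\<alpha> + A) = (P - A^2 * q) / q + \<alpha>^2 * (q - Q) / q"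
    using qpos alQ by (simp add: field_simps power2_eq_square)
  have alA: "\<alpha> \<le> e + 1" using e_eq A1 by linarith
  have d0: "0 \<le> d1" "0 \<le> d2" "0 \<le> d3" by (auto simp: d1_def d2_def d3_def)
  have goal_rhs: "0 \<le> 12 * ((Mij - Aij)^2 + (Mik - Aik)^2 + (Mjk - Ajk)^2) / amin^6"
                 "0 \<le> 64 * n * (Mjk - Ajk)^4 / amin^8"
    using hn am by auto
  show ?thesis
  proof (cases "d3 \<le> q / 2")
    case True
    define r1 where "r1 = (d1 + d2) / (q * amin)"
    define r2 where "r2 = d3 / q"
    have r2h: "r2 \<le> 1/2" "0 \<le> r2" using True qpos d0 by (auto simp: r2_def)
    have r10: "0 \<le> r1" using d0 qpos am by (simp add: r1_def)
    have s: "\<alpha> + A \<ge> amin" using al0 A1 by linarith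
    have "e * (\<alpha> + A) = \<bar>(P - A^2 * q) / q + \<alpha>^2 * (q - Q) / q\<bar>"
    proof -
      have "\<bar>\<alpha> + A\<bar> = \<alpha> + A" using s am by simp
      then have "e * (\<alpha> + A) = \<bar>(\<alpha> - A) * (\<alpha> + A)\<bar>" using e_eq by (simp add: abs_mult)
      then show ?thesis by (simp only: key)
    qed
    also have "\<dots> \<le> \<bar>P - A^2 * q\<bar> / q + \<alpha>^2 * \<bar>q - Q\<bar> / q"
      using qpos abs_triangle_ineq[of "(P - A^2*q)/q" "\<alpha>^2*(q-Q)/q"] by (simp add: abs_mult abs_divide)
    also have "\<dots> \<le> (d1 + d2) / q + \<alpha>^2 * d3 / q"
      using Pp Qq qpos by (intro add_mono divide_right_mono mult_left_mono) auto
    also have "(d1 + d2) / q \<le> (\<alpha> + A) * r1"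
    proof -
      have "(d1 + d2) / q = amin * r1" using am by (simp add: r1_def)
      also have "\<dots> \<le> (\<alpha> + A) * r1" using s r10 by (rule mult_right_mono)
      finally show ?thesis .
    qed
    also have "\<alpha>^2 * d3 / q \<le> (\<alpha> + A) * (\<alpha> * r2)"
    proof -
      have "\<alpha>^2 * d3 / q = \<alpha> * (\<alpha> * r2)" by (simp add: r2_def power2_eq_square)
      also have "\<dots> \<le> (\<alpha> + A) * (\<alpha> * r2)" using A1 am al0 r2h by (intro mult_right_mono) auto
      finally show ?thesis .
    qed
    finally have "e * (\<alpha> + A) \<le> (\<alpha> + A) * (r1 + \<alpha> * r2)" by (simp add: algebra_simps)
    then have e1: "e \<le> r1 + \<alpha> * r2" using s am by (simp add: mult.commute)
    have c1: "\<alpha> * r2 \<le> (e + 1) * r2" using alA r2h(2) by (rule mult_right_mono)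
    have c2: "e * r2 \<le> e / 2" using e0 r2h mult_left_mono[of r2 "1/2" e] by simp
    have "e \<le> 2 * (r1 + r2)" using e1 c1 c2 by (simp add: algebra_simps)
    also have "r1 \<le> (d1 + d2) / amin^3"
    proof -
      have "amin^3 \<le> q * amin" using q1 am by (simp add: power3_eq_cube power2_eq_square mult_right_mono)
      then show ?thesis unfolding r1_def using d0 am qpos by (intro divide_left_mono) auto
    qed
    also have "r2 \<le> d3 / amin^3"
    proof -
      have "amin^3 \<le> amin^2" using am am1 by (simp add: power_decreasing)
      then have "amin^3 \<le> q" using q1 by linarith
      then show ?thesis unfolding r2_def using d0 am qpos by (intro divide_left_mono) auto
    qed
    finally have e2: "e \<le> 2 * (d1 + d2 + d3) / amin^3" by (simp add: add_divide_distrib)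
    have "(ah - a)^2 = e^2" by (simp add: e_def)
    also have "\<dots> \<le> (2 * (d1 + d2 + d3) / amin^3)^2" by (rule power_mono[OF e2 e0])
    also have "\<dots> = 4 * (d1 + d2 + d3)^2 / amin^6"
    proof -
      have "(amin^3)^2 = amin^6" by (simp flip: power_mult)
      then show ?thesis by (simp only: power_divide power_mult_distrib) simp
    qed
    also have "\<dots> \<le> 4 * (3 * (d1^2 + d2^2 + d3^2)) / amin^6"
    proof -
      have "(d1 + d2 + d3)^2 \<le> 3 * (d1^2 + d2^2 + d3^2)"
      proof -
        have eq: "(d1+d2+d3)^2 = d1^2+d2^2+d3^2+2*d1*d2+2*d2*d3+2*d1*d3" by algebra
        have eq2: "(d1-d2)^2 + (d2-d3)^2 + (d1-d3)^2 = 2*(d1^2+d2^2+d3^2) - 2*d1*d2 - 2*d2*d3 - 2*d1*d3" by algebra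
        have "0 \<le> (d1-d2)^2 + (d2-d3)^2 + (d1-d3)^2" by simp
        then show ?thesis using eq eq2 by (smt (verit))
      qed
      then show ?thesis using am by (intro divide_right_mono) auto
    qed
    also have "\<dots> = 12 * ((Mij - Aij)^2 + (Mik - Aik)^2 + (Mjk - Ajk)^2) / amin^6"
      by (simp add: d1_def d2_def d3_def)
    finally show ?thesis using goal_rhs by linarith
  next
    case False
    have "amin^2 / 2 < d3" using False q1 by linarith
    then have "1 < 2 * d3 / amin^2" using am by (simp add: field_simps)
    then have big: "1 \<le> (2 * d3 / amin^2)^4" by (intro one_le_power) auto
    have "\<alpha>^2 \<le> n"
    proof -
      have "P / Q \<le> 1 / Q" using P0 Qpos by (intro divide_right_mono) auto
      also have "1 / Q \<le> n" using hn Qpos by (simp add: field_simps Q_def)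
      finally show ?thesis using al2 by simp
    qed
    have "(ah - a)^2 = e^2" by (simp add: e_def)
    also have "\<dots> \<le> (\<alpha> + 1)^2" using e_eq A1 al0 e0 am by (intro power_mono) auto
    also have "\<dots> \<le> 2 * \<alpha>^2 + 2"
    proof -
      have "(\<alpha> + 1)^2 = 2 * \<alpha>^2 + 2 - (\<alpha> - 1)^2" by algebra
      then show ?thesis by simp
    qed
    also have "\<dots> \<le> 4 * n" using \<open>\<alpha>^2 \<le> n\<close> hn by linarith
    also have "\<dots> \<le> 4 * n * (2 * d3 / amin^2)^4" using big hn by simp
    also have "\<dots> = 64 * n * (Mjk - Ajk)^4 / amin^8"
    proof -
      have h1: "(amin^2)^4 = amin^8" by (simp flip: power_mult)
      have h2: "\<bar>Mjk - Ajk\<bar>^4 = (Mjk - Ajk)^4" by (simp add: power_even_abs)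
      show ?thesis unfolding d3_def by (simp only: power_divide power_mult_distrib h1 h2) simp
    qed
    finally show ?thesis using goal_rhs by linarith
  qed
qed



lemma samples_supp:
  assumes "S \<in> set_pmf (samples n D)" "s < n"
  shows "\<exists>y. (S s, y) \<in> set_pmf D"
proof -
  have "S s \<in> set_pmf (map_pmf fst D)"
    using assms by (auto simp: samples_def set_Pi_pmf PiE_dflt_def)
  then show ?thesis by force
qed

lemma moment_bnd:
  assumes "\<And>v y. (v, y) \<in> set_pmf D \<Longrightarrow> v x \<in> {-1, 1} \<and> v z \<in> {-1, 1}"
  shows "\<bar>moment D x z\<bar> \<le> 1"
  unfolding moment_def
  by (rule exp_abs_le) (use assms in \<open>fastforce simp: abs_mult\<close>)

lemma emp_bnd:
  assumes "\<And>v y. (v, y) \<in> set_pmf D \<Longrightarrow> v x \<in> {-1, 1} \<and> v z \<in> {-1, 1}"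
    and S: "S \<in> set_pmf (samples n D)" 
  shows "\<bar>emp_moment n S x z\<bar> \<le> 1"
proof (cases "n = 0")
  case True then show ?thesis by (simp add: emp_moment_def)
next
  case False
  have "\<bar>\<Sum>s<n. S s x * S s z\<bar> \<le> (\<Sum>s<n. \<bar>S s x * S s z\<bar>)" by (rule sum_abs)
  also have "\<dots> \<le> (\<Sum>s<n. 1)"
  proof (intro sum_mono)
    fix s assume "s \<in> {..<n}"
    then obtain y where "(S s, y) \<in> set_pmf D" using samples_supp[OF S] by blast
    then show "\<bar>S s x * S s z\<bar> \<le> 1" using assms(1) by (fastforce simp: abs_mult)
  qed
  finally show ?thesis using False by (simp add: emp_moment_def abs_divide)
qed

lemma emp_ge:
  assumes "\<And>v y. (v, y) \<in> set_pmf D \<Longrightarrow> v x \<in> {-1, 1} \<and> v z \<in> {-1, 1}"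
    and S: "S \<in> set_pmf (samples n D)" and nz: "emp_moment n S x z \<noteq> 0"
  shows "1 \<le> real n * \<bar>emp_moment n S x z\<bar>"
proof -
  have n0: "n \<noteq> 0" using nz by (auto simp: emp_moment_def)
  have "(\<Sum>s<n. S s x * S s z) \<in> \<int>"
  proof (intro Ints_sum)
    fix s assume "s \<in> {..<n}"
    then obtain y where "(S s, y) \<in> set_pmf D" using samples_supp[OF S] by blast
    then show "S s x * S s z \<in> \<int>" using assms(1) by fastforce
  qed
  moreover have "(\<Sum>s<n. S s x * S s z) \<noteq> 0" using nz by (auto simp: emp_moment_def)
  ultimately have "1 \<le> \<bar>\<Sum>s<n. S s x * S s z\<bar>" by (rule Ints_nonzero_abs_ge1)
  then show ?thesis using n0 by (simp add: emp_moment_def abs_divide)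
qed

lemma dev_bounds:
  assumes sup: "\<And>v y. (v, y) \<in> set_pmf D \<Longrightarrow> v x \<in> {-1, 1} \<and> v z \<in> {-1, 1}"
    and n: "1 \<le> n"
  shows "measure_pmf.expectation (samples n D) (\<lambda>S. (emp_moment n S x z - moment D x z)^2) \<le> 4 / real n"
    and "measure_pmf.expectation (samples n D) (\<lambda>S. (emp_moment n S x z - moment D x z)^4) \<le> 48 / real n^2"
proof -
  let ?M = "moment D x z"
  have Mb: "\<bar>?M\<bar> \<le> 1" by (rule moment_bnd[OF sup])
  interpret I: iidsum "map_pmf fst D" "\<lambda>v. v x * v z - ?M" "\<lambda>_. 0"
  proof
    fix v assume "v \<in> set_pmf (map_pmf fst D)"
    then obtain y where "(v, y) \<in> set_pmf D" by force
    then have "\<bar>v x * v z\<bar> \<le> 1" using sup by (fastforce simp: abs_mult)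
    then show "\<bar>v x * v z - ?M\<bar> \<le> 2" using Mb by linarith
  next
    have i1: "integrable (measure_pmf (map_pmf fst D)) (\<lambda>v. v x * v z)"
      by (rule int_bnd[where K=1]) (use sup in \<open>fastforce simp: abs_mult\<close>)
    have "measure_pmf.expectation (map_pmf fst D) (\<lambda>v. v x * v z) = ?M"
      by (simp add: moment_def case_prod_unfold)
    then show "measure_pmf.expectation (map_pmf fst D) (\<lambda>v. v x * v z - ?M) = 0"
      using i1 by (simp add: Bochner_Integration.integral_diff)
  qed
  have PP: "I.PP n = samples n D" by (simp add: I.PP_def samples_def)
  have dev: "emp_moment n S x z - ?M = I.TT n S / n" for S
    using n by (simp add: emp_moment_def I.TT_def sum_subtractf field_simps)
  have "measure_pmf.expectation (samples n D) (\<lambda>S. (emp_moment n S x z - ?M)^2)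
        = measure_pmf.expectation (I.PP n) (\<lambda>S. I.TT n S ^ 2) / real n^2"
    unfolding dev PP[symmetric] by (simp add: power_divide)
  also have "\<dots> \<le> (4 * real n) / real n^2" using I.E2[of n] by (intro divide_right_mono) auto
  also have "\<dots> = 4 / real n" using n by (simp add: power2_eq_square)
  finally show "measure_pmf.expectation (samples n D) (\<lambda>S. (emp_moment n S x z - moment D x z)^2) \<le> 4 / real n" .
  have "measure_pmf.expectation (samples n D) (\<lambda>S. (emp_moment n S x z - ?M)^4)
        = measure_pmf.expectation (I.PP n) (\<lambda>S. I.TT n S ^ 4) / real n^4"
    unfolding dev PP[symmetric] by (simp add: power_divide)
  also have "\<dots> \<le> (48 * real n^2) / real n^4" using I.E4[of n] by (intro divide_right_mono) auto
  also have "\<dots> = 48 / real n^2" using n by (simp add: power2_eq_square power4_eq_xxxx)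
  finally show "measure_pmf.expectation (samples n D) (\<lambda>S. (emp_moment n S x z - moment D x z)^4) \<le> 48 / real n^2" .
qed



lemma sqrt_am: 
  assumes "0 \<le> z" "0 < t" shows "sqrt z \<le> (z / t + t) / 2"
proof -
  have "0 \<le> (sqrt z - t)^2" by simp
  also have "(sqrt z - t)^2 = z - 2 * t * sqrt z + t^2" using assms by (simp add: power2_diff algebra_simps)
  finally have "2 * t * sqrt z \<le> z + t^2" by simp
  then show ?thesis using assms by (simp add: field_simps power2_eq_square)
qed

theorem lemma5:
  shows "\<exists>C::real. \<forall>(m::nat) (n::nat)
      (D :: ((nat \<Rightarrow> real) \<times> (nat \<Rightarrow> real)) pmf) (hid :: nat \<Rightarrow> nat)
      (T :: nat \<Rightarrow> nat \<times> nat) (ahat :: (nat \<Rightarrow> nat \<Rightarrow> real) \<Rightarrow> nat \<Rightarrow> real) (amin :: real).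
      ((\<forall>(v, y) \<in> set_pmf D. \<forall>i<m. v i \<in> {-1, 1} \<and> y (hid i) \<in> {-1, 1}) \<and>
       (\<forall>i<m. fst (T i) < m \<and> snd (T i) < m \<and> fst (T i) \<noteq> i \<and> snd (T i) \<noteq> i \<and>
              fst (T i) \<noteq> snd (T i) \<and>
              hid (fst (T i)) = hid i \<and> hid (snd (T i)) = hid i \<and>
              moment D i (fst (T i)) = accuracy D hid i * accuracy D hid (fst (T i)) \<and>
              moment D i (snd (T i)) = accuracy D hid i * accuracy D hid (snd (T i)) \<and>
              moment D (fst (T i)) (snd (T i)) =
                accuracy D hid (fst (T i)) * accuracy D hid (snd (T i))) \<and>
       (\<forall>S \<in> set_pmf (samples n D). \<forall>i<m.
              \<bar>ahat S i\<bar> = triplet_abs n S i (fst (T i)) (snd (T i)) \<and>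
              sgn (ahat S i) = sgn (accuracy D hid i) \<and>
              amin \<le> \<bar>ahat S i\<bar>) \<and>
       (\<forall>S \<in> set_pmf (samples n D). \<forall>i<m. \<forall>j<m. emp_moment n S i j \<noteq> 0) \<and>
       (\<forall>i<m. amin \<le> \<bar>accuracy D hid i\<bar>) \<and>
       0 < amin)
      \<longrightarrow>
      (\<integral>\<^sup>+ S. ennreal (sqrt (\<Sum>i<m. (ahat S i - accuracy D hid i)\<^sup>2)) \<partial>measure_pmf (samples n D))
        \<le> ennreal (C * (1 / amin ^ 5) * sqrt (real m / real n))"
proof (intro exI[of _ 57] allI impI, elim conjE)
  fix m n :: nat and D :: "((nat \<Rightarrow> real) \<times> (nat \<Rightarrow> real)) pmf" and hid :: "nat \<Rightarrow> nat"
    and T :: "nat \<Rightarrow> nat \<times> nat" and ahat :: "(nat \<Rightarrow> nat \<Rightarrow> real) \<Rightarrow> nat \<Rightarrow> real" and amin :: real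
  assume Hsup: "\<forall>(v, y) \<in> set_pmf D. \<forall>i<m. v i \<in> {-1, 1} \<and> y (hid i) \<in> {-1, 1}"
    and HT: "\<forall>i<m. fst (T i) < m \<and> snd (T i) < m \<and> fst (T i) \<noteq> i \<and> snd (T i) \<noteq> i \<and>
              fst (T i) \<noteq> snd (T i) \<and>
              hid (fst (T i)) = hid i \<and> hid (snd (T i)) = hid i \<and>
              moment D i (fst (T i)) = accuracy D hid i * accuracy D hid (fst (T i)) \<and>
              moment D i (snd (T i)) = accuracy D hid i * accuracy D hid (snd (T i)) \<and>
              moment D (fst (T i)) (snd (T i)) =
                accuracy D hid (fst (T i)) * accuracy D hid (snd (T i))"
    and Hah: "\<forall>S \<in> set_pmf (samples n D). \<forall>i<m.
              \<bar>ahat S i\<bar> = triplet_abs n S i (fst (T i)) (snd (T i)) \<and>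
              sgn (ahat S i) = sgn (accuracy D hid i) \<and>
              amin \<le> \<bar>ahat S i\<bar>"
    and Hnz: "\<forall>S \<in> set_pmf (samples n D). \<forall>i<m. \<forall>j<m. emp_moment n S i j \<noteq> 0"
    and Hamin: "\<forall>i<m. amin \<le> \<bar>accuracy D hid i\<bar>"
    and am: "0 < amin"
  let ?P = "samples n D"
  define a where "a = accuracy D hid"
  define Z where "Z = (\<lambda>S. \<Sum>i<m. (ahat S i - a i)\<^sup>2)"
  show "(\<integral>\<^sup>+ S. ennreal (sqrt (\<Sum>i<m. (ahat S i - accuracy D hid i)\<^sup>2)) \<partial>measure_pmf ?P)
        \<le> ennreal (57 * (1 / amin ^ 5) * sqrt (real m / real n))"
  proof (cases "m = 0")
    case True then show ?thesis by simp
  next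
    case False
    have sup: "\<And>v y x. (v, y) \<in> set_pmf D \<Longrightarrow> x < m \<Longrightarrow> v x \<in> {-1, 1} \<and> y (hid x) \<in> {-1, 1}"
      using Hsup by blast
    have sup2: "\<And>v y. (v, y) \<in> set_pmf D \<Longrightarrow> v x \<in> {-1, 1} \<and> v z \<in> {-1, 1}" if "x < m" "z < m" for x z
      using sup that by blast
    have abnd: "\<bar>a i\<bar> \<le> 1" if "i < m" for i
      unfolding a_def accuracy_def
      by (rule exp_abs_le) (use sup that in \<open>fastforce simp: abs_mult\<close>)
    have amin_a: "amin \<le> \<bar>a i\<bar>" if "i < m" for i using Hamin that by (simp add: a_def)
    have am1: "amin \<le> 1" using abnd[of 0] amin_a[of 0] False by auto
    obtain S0 where S0: "S0 \<in> set_pmf ?P" by (meson ex_in_conv set_pmf_not_empty)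
    have n1: "1 \<le> n"
    proof (rule ccontr)
      assume "\<not> 1 \<le> n"
      then have "n = 0" by simp
      then have "emp_moment n S0 0 0 = 0" by (simp add: emp_moment_def)
      then show False using Hnz S0 False by blast
    qed

    define j where "j = (\<lambda>i. fst (T i))"
    define k where "k = (\<lambda>i. snd (T i))"
    define d where "d = (\<lambda>x z S. emp_moment n S x z - moment D x z)"
    define R where "R = (\<lambda>i S. 12 * ((d i (j i) S)^2 + (d i (k i) S)^2 + (d (j i) (k i) S)^2) / amin^6
                     + 64 * real n * (d (j i) (k i) S)^4 / amin^8)"
    have jk: "j i < m" "k i < m" if "i < m" for i using HT that by (auto simp: j_def k_def)
    have dbnd: "\<bar>d x z S\<bar> \<le> 2" if "S \<in> set_pmf ?P" "x < m" "z < m" for x z S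
    proof -
      have "\<bar>emp_moment n S x z\<bar> \<le> 1" by (rule emp_bnd[OF _ that(1)]) (use sup that(2,3) in blast)
      moreover have "\<bar>moment D x z\<bar> \<le> 1" by (rule moment_bnd) (use sup that(2,3) in blast)
      ultimately show ?thesis unfolding d_def by linarith
    qed
    have dpow: "\<bar>d x z S ^ p\<bar> \<le> 2 ^ p" if "S \<in> set_pmf ?P" "x < m" "z < m" for x z S p
      unfolding power_abs by (rule power_mono[OF dbnd[OF that]]) simp
    have dint: "integrable (measure_pmf ?P) (\<lambda>S. d x z S ^ p)" if "x < m" "z < m" for x z p
      by (rule int_bnd[where K="2^p"]) (rule dpow[OF _ that])
    have pt: "(ahat S i - a i)^2 \<le> R i S" if S: "S \<in> set_pmf ?P" and i: "i < m" for S i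
    proof -
      have HTi: "moment D i (j i) = a i * a (j i)" "moment D i (k i) = a i * a (k i)"
                "moment D (j i) (k i) = a (j i) * a (k i)"
        using HT i by (auto simp: j_def k_def a_def)
      have Hahi: "\<bar>ahat S i\<bar> = triplet_abs n S i (j i) (k i)" "sgn (ahat S i) = sgn (a i)"
        using Hah S i by (auto simp: j_def k_def a_def)
      show ?thesis unfolding R_def d_def
      proof (rule det[OF HTi])
        show "amin \<le> \<bar>a i\<bar>" "amin \<le> \<bar>a (j i)\<bar>" "amin \<le> \<bar>a (k i)\<bar>"
          using amin_a i jk by auto
        show "\<bar>a i\<bar> \<le> 1" "\<bar>a (j i)\<bar> \<le> 1" "\<bar>a (k i)\<bar> \<le> 1"
          using abnd i jk by auto
        show "0 < amin" by (rule am)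
        show "\<bar>emp_moment n S i (j i)\<bar> \<le> 1" "\<bar>emp_moment n S i (k i)\<bar> \<le> 1"
             "\<bar>emp_moment n S (j i) (k i)\<bar> \<le> 1"
          by (rule emp_bnd[OF _ S]; use sup i jk in blast)+
        show "1 \<le> real n" using n1 by simp
        show "1 \<le> real n * \<bar>emp_moment n S (j i) (k i)\<bar>"
          by (rule emp_ge[OF _ S]) (use sup i jk Hnz S in blast)+
        show "\<bar>ahat S i\<bar> = sqrt (\<bar>emp_moment n S i (j i)\<bar> * \<bar>emp_moment n S i (k i)\<bar> / \<bar>emp_moment n S (j i) (k i)\<bar>)"
          using Hahi by (simp add: triplet_abs_def)
        show "sgn (ahat S i) = sgn (a i)" by (rule Hahi(2))
      qed
    qed
    have Rint: "integrable (measure_pmf ?P) (R i)" if i: "i < m" for i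
    proof -
      have "R i = (\<lambda>S. 0 + (12 / amin^6) * d i (j i) S ^ 2 + (12 / amin^6) * d i (k i) S ^ 2
                + (12 / amin^6) * d (j i) (k i) S ^ 2 + (64 * real n / amin^8) * d (j i) (k i) S ^ 4)"
        using am by (auto simp: R_def field_simps)
      then show ?thesis using dint i jk by simp
    qed
    have ER: "measure_pmf.expectation ?P (R i) \<le> 3216 / (real n * amin^8)" if i: "i < m" for i
    proof -
      have "R i = (\<lambda>S. 0 + (12 / amin^6) * d i (j i) S ^ 2 + (12 / amin^6) * d i (k i) S ^ 2
                + (12 / amin^6) * d (j i) (k i) S ^ 2 + (64 * real n / amin^8) * d (j i) (k i) S ^ 4)"
        using am by (auto simp: R_def field_simps)
      then have "measure_pmf.expectation ?P (R i) = 0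
           + (12 / amin^6) * measure_pmf.expectation ?P (\<lambda>S. d i (j i) S ^ 2)
           + (12 / amin^6) * measure_pmf.expectation ?P (\<lambda>S. d i (k i) S ^ 2)
           + (12 / amin^6) * measure_pmf.expectation ?P (\<lambda>S. d (j i) (k i) S ^ 2)
           + (64 * real n / amin^8) * measure_pmf.expectation ?P (\<lambda>S. d (j i) (k i) S ^ 4)"
        by (simp only:) (rule E_lin4; rule dint; use i jk in simp)
      also have "\<dots> \<le> 0 + (12 / amin^6) * (4 / real n) + (12 / amin^6) * (4 / real n)
           + (12 / amin^6) * (4 / real n) + (64 * real n / amin^8) * (48 / real n ^ 2)"
        unfolding d_def using am
        by (intro add_mono mult_left_mono dev_bounds sup2 order_refl n1 i jk) auto
      also have "\<dots> = 144 / (real n * amin^6) + 3072 / (real n * amin^8)"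
        using n1 by (simp add: field_simps power2_eq_square)
      also have "\<dots> \<le> 144 / (real n * amin^8) + 3072 / (real n * amin^8)"
      proof -
        have "amin^8 \<le> amin^6" using am am1 by (intro power_decreasing) auto
        then show ?thesis using am n1 by (intro add_mono divide_left_mono mult_left_mono) auto
      qed
      finally show ?thesis by simp
    qed

    have Z0: "0 \<le> Z S" for S by (simp add: Z_def sum_nonneg)
    have Zle: "Z S \<le> (\<Sum>i<m. R i S)" if S: "S \<in> set_pmf ?P" for S
      unfolding Z_def by (intro sum_mono pt[OF S]) auto
    have RSint: "integrable (measure_pmf ?P) (\<lambda>S. \<Sum>i<m. R i S)"
      using Rint by (intro Bochner_Integration.integrable_sum) auto
    have Zint: "integrable (measure_pmf ?P) Z"
    proof (rule Bochner_Integration.integrable_bound[OF RSint])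
      show "Z \<in> borel_measurable (measure_pmf ?P)" by simp
      show "AE x in measure_pmf ?P. norm (Z x) \<le> norm (\<Sum>i<m. R i x)"
        using Zle Z0 by (auto simp: AE_measure_pmf_iff intro: order_trans[OF _ abs_ge_self])
    qed
    define B where "B = 3216 * (real m / real n) / amin^8"
    have Bpos: "0 < B" using False n1 am by (simp add: B_def)
    have EZ: "measure_pmf.expectation ?P Z \<le> B"
    proof -
      have "measure_pmf.expectation ?P Z \<le> measure_pmf.expectation ?P (\<lambda>S. \<Sum>i<m. R i S)"
        using Zint RSint Zle by (intro integral_mono_AE) (auto simp: AE_measure_pmf_iff)
      also have "\<dots> = (\<Sum>i<m. measure_pmf.expectation ?P (R i))"
        using Rint by (intro Bochner_Integration.integral_sum) auto
      also have "\<dots> \<le> (\<Sum>i<m. 3216 / (real n * amin^8))" using ER by (intro sum_mono) auto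
      also have "\<dots> = B" by (simp add: B_def)
      finally show ?thesis .
    qed
    define t where "t = sqrt B"
    have tpos: "0 < t" using Bpos by (simp add: t_def)
    have Bt: "B / t = t" using Bpos by (simp add: t_def real_div_sqrt)
    have "(\<integral>\<^sup>+ S. ennreal (sqrt (\<Sum>i<m. (ahat S i - accuracy D hid i)\<^sup>2)) \<partial>measure_pmf ?P)
          = (\<integral>\<^sup>+ S. ennreal (sqrt (Z S)) \<partial>measure_pmf ?P)" by (simp add: Z_def a_def)
    also have "\<dots> \<le> (\<integral>\<^sup>+ S. ennreal ((Z S / t + t) / 2) \<partial>measure_pmf ?P)"
      by (intro nn_integral_mono ennreal_leI sqrt_am Z0 tpos)
    also have "\<dots> = ennreal (measure_pmf.expectation ?P (\<lambda>S. (Z S / t + t) / 2))"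
      using Zint Z0 tpos by (intro nn_integral_eq_integral) (auto intro!: AE_I2 add_nonneg_nonneg)
    also have "measure_pmf.expectation ?P (\<lambda>S. (Z S / t + t) / 2) = (measure_pmf.expectation ?P Z / t + t) / 2"
      using Zint by (simp add: Bochner_Integration.integral_add)
    also have "\<dots> \<le> (B / t + t) / 2" using EZ tpos by (simp add: divide_right_mono)
    also have "\<dots> = t" using Bt by simp
    also have "t \<le> 57 * (1 / amin ^ 5) * sqrt (real m / real n)"
    proof -
      have s8: "sqrt (amin^8) = amin^4"
      proof -
        have "sqrt (amin^8) = sqrt ((amin^4)^2)" by (simp flip: power_mult)
        also have "\<dots> = amin^4" using am by (simp only: real_sqrt_abs) simp
        finally show ?thesis .
      qed
      have "t = sqrt 3216 * sqrt (real m / real n) / amin^4"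
        by (simp add: t_def B_def real_sqrt_mult real_sqrt_divide s8)
      also have "\<dots> \<le> 57 * sqrt (real m / real n) / amin^4"
      proof -
        have "sqrt 3216 \<le> 57" by (rule real_le_lsqrt) auto
        then show ?thesis using am by (intro divide_right_mono mult_right_mono) auto
      qed
      also have "\<dots> \<le> 57 * sqrt (real m / real n) / amin^5"
      proof -
        have "amin^5 \<le> amin^4" using am am1 by (intro power_decreasing) auto
        then show ?thesis using am by (intro divide_left_mono) auto
      qed
      finally show ?thesis by simp
    qed
    finally show ?thesis using ennreal_leI by (simp add: mult.commute)
  qed
qed

end
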